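(* Let $T>0$, $0<\eta<T$, $0<\alpha <\frac{2T}{\eta ^{2}}$ and $0\leq\beta < \frac{2T-\alpha \eta ^{2}}{\alpha \eta ^{2}-2\eta +2T}$. If $y\in C([0,T],[0,\infty))$, then the unique solution $u$ of \[ u''(t)+y(t)=0,\ t\in(0,T),\qquad u(0)=\beta u(\eta),\quad u(T)=\alpha\int_0^\eta u(s)\,ds \] satisfies \[ \min_{t\in [\eta,T]}u(t)\geq \gamma \|u\|,\qquad \|u\|=\max_{t\in[0,T]}|u(t)|, \] where \[ \gamma:=\min\left\{\frac{\eta}{T}, \frac{\alpha(\beta+1)\eta^{2}}{2T}, \frac{\alpha(\beta+1)\eta(T-\eta)}{2T-\alpha(\beta+1)\eta^{2}}\right\}\in(0,1). \]
   Context: A solution is a function $u\in C^2([0,T])$ satisfying the differential equation on $(0,T)$ and the two boundary conditions; under the stated hypotheses this problem has a unique solution. *)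

theory Defs
  imports "HOL-Analysis.Analysis"
begin

definition C2_on :: "real \<Rightarrow> (real \<Rightarrow> real) \<Rightarrow> bool" where
  "C2_on T u \<longleftrightarrow> (\<exists>u1 u2.
      (\<forall>t\<in>{0..T}. (u has_real_derivative u1 t) (at t within {0..T})) \<and>
      (\<forall>t\<in>{0..T}. (u1 has_real_derivative u2 t) (at t within {0..T})) \<and>
      continuous_on {0..T} u2)"

definition is_solution ::
  "real \<Rightarrow> real \<Rightarrow> real \<Rightarrow> real \<Rightarrow> (real \<Rightarrow> real) \<Rightarrow> (real \<Rightarrow> real) \<Rightarrow> bool" where
  "is_solution T \<eta> \<alpha> \<beta> y u \<longleftrightarrow>
     C2_on T u \<and>
     (\<forall>t\<in>{0<..<T}. deriv (deriv u) t + y t = 0) \<and>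
     u 0 = \<beta> * u \<eta> \<and>
     u T = \<alpha> * integral {0..\<eta>} u"

definition sup_norm :: "real \<Rightarrow> (real \<Rightarrow> real) \<Rightarrow> real" where
  "sup_norm T u = Sup ((\<lambda>t. \<bar>u t\<bar>) ` {0..T})"

definition gamma_const :: "real \<Rightarrow> real \<Rightarrow> real \<Rightarrow> real \<Rightarrow> real" where
  "gamma_const T \<eta> \<alpha> \<beta> = Min {\<eta> / T, \<alpha> * (\<beta> + 1) * \<eta>^2 / (2 * T),
      \<alpha> * (\<beta> + 1) * \<eta> * (T - \<eta>) / (2 * T - \<alpha> * (\<beta> + 1) * \<eta>^2)}"

end

theory Submission
  imports Defs
begin

lemma mvt_within:
  fixes f f' :: "real \<Rightarrow> real"
  assumes "0 \<le> a" "a \<le> b" "b \<le> T"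
    and d: "\<forall>t\<in>{0..T}. (f has_real_derivative f' t) (at t within {0..T})"
  shows "\<exists>x\<in>{a..b}. f b - f a = f' x * (b - a)"
proof -
  have "\<exists>x\<in>{a..b}. f b - f a = (\<lambda>h. f' x * h) (b - a)"
  proof (rule mvt_very_simple[OF assms(2)])
    fix x assume x: "a \<le> x" "x \<le> b"
    have "(f has_real_derivative f' x) (at x within {0..T})" using d x assms by auto
    then have "(f has_real_derivative f' x) (at x within {a..b})"
      by (rule DERIV_subset) (use assms in auto)
    then show "(f has_derivative (\<lambda>h. f' x * h)) (at x within {a..b})"
      by (simp add: has_field_derivative_def)
  qed
  then show ?thesis by simp
qed

lemma concave_ineq:
  fixes u u1 u2 :: "real \<Rightarrow> real"
  assumes d1: "\<forall>t\<in>{0..T}. (u has_real_derivative u1 t) (at t within {0..T})"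
    and d2: "\<forall>t\<in>{0..T}. (u1 has_real_derivative u2 t) (at t within {0..T})"
    and neg: "\<forall>t\<in>{0..T}. u2 t \<le> 0"
    and x: "0 \<le> x" "x \<le> z" "z \<le> w" "w \<le> T"
  shows "(w - z) * u x + (z - x) * u w \<le> (w - x) * u z"
proof -
  have mono: "u1 q \<le> u1 p" if pq: "0 \<le> p" "p \<le> q" "q \<le> T" for p q
  proof -
    obtain r where r: "r \<in> {p..q}" "u1 q - u1 p = u2 r * (q - p)"
      using mvt_within[of p q T u1 u2] pq d2 by blast
    have "u2 r \<le> 0" using neg r pq by auto
    then have "u2 r * (q - p) \<le> 0" using pq by (simp add: mult_nonpos_nonneg)
    then show ?thesis using r by simp
  qed
  obtain p where p: "p \<in> {x..z}" "u z - u x = u1 p * (z - x)"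
    using mvt_within[OF x(1) x(2) _ d1] x by force
  obtain q where q: "q \<in> {z..w}" "u w - u z = u1 q * (w - z)"
    using mvt_within[of z w T u u1] d1 x by force
  have "u1 q \<le> u1 p" using mono[of p q] p q x by auto
  then have "u1 q * ((w - z) * (z - x)) \<le> u1 p * ((w - z) * (z - x))"
    using x by (intro mult_right_mono) auto
  moreover have "(u w - u z) * (z - x) = u1 q * ((w - z) * (z - x))" using q by simp
  moreover have "(u z - u x) * (w - z) = u1 p * ((w - z) * (z - x))" using p by simp
  ultimately have "(u w - u z) * (z - x) \<le> (u z - u x) * (w - z)" by linarith
  then show ?thesis by (simp add: algebra_simps)
qed

theorem lemma2p4:
  fixes T \<eta> \<alpha> \<beta> :: real and y u :: "real \<Rightarrow> real"
  assumes "T > 0" and "0 < \<eta>" and "\<eta> < T"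
    and "0 < \<alpha>" and "\<alpha> < 2 * T / \<eta>^2"
    and "0 \<le> \<beta>"
    and "\<beta> < (2 * T - \<alpha> * \<eta>^2) / (\<alpha> * \<eta>^2 - 2 * \<eta> + 2 * T)"
    and "continuous_on {0..T} y" and "\<forall>t\<in>{0..T}. y t \<ge> 0"
    and "is_solution T \<eta> \<alpha> \<beta> y u"
  shows "0 < gamma_const T \<eta> \<alpha> \<beta> \<and> gamma_const T \<eta> \<alpha> \<beta> < 1 \<and>
         Inf (u ` {\<eta>..T}) \<ge> gamma_const T \<eta> \<alpha> \<beta> * sup_norm T u"
proof -
  note T = assms(1) and e = assms(2,3) and a = assms(4,5) and b = assms(6,7)
  obtain u1 u2 where d1: "\<forall>t\<in>{0..T}. (u has_real_derivative u1 t) (at t within {0..T})"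
    and d2: "\<forall>t\<in>{0..T}. (u1 has_real_derivative u2 t) (at t within {0..T})"
    and cu2: "continuous_on {0..T} u2"
    using assms(10) unfolding is_solution_def C2_on_def by blast
  have ode: "\<forall>t\<in>{0<..<T}. deriv (deriv u) t + y t = 0"
    and bc0: "u 0 = \<beta> * u \<eta>" and bcT: "u T = \<alpha> * integral {0..\<eta>} u"
    using assms(10) unfolding is_solution_def by auto
  have at1: "(u has_real_derivative u1 s) (at s)" if "s \<in> {0<..<T}" for s
  proof -
    have "at s within {0..T} = at s" using that by (intro at_within_interior) simp
    moreover have "(u has_real_derivative u1 s) (at s within {0..T})" using d1 that by auto
    ultimately show ?thesis by simp
  qed
  have at2: "(u1 has_real_derivative u2 s) (at s)" if "s \<in> {0<..<T}" for s
  proof -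
    have "at s within {0..T} = at s" using that by (intro at_within_interior) simp
    moreover have "(u1 has_real_derivative u2 s) (at s within {0..T})" using d2 that by auto
    ultimately show ?thesis by simp
  qed
  have u2y: "u2 t = - y t" if t: "t \<in> {0<..<T}" for t
  proof -
    have "(deriv u has_real_derivative u2 t) (at t)"
      by (rule has_field_derivative_transform_within_open[OF at2[OF t], of "{0<..<T}"])
         (use t at1 in \<open>auto intro: DERIV_imp_deriv[symmetric]\<close>)
    then have "deriv (deriv u) t = u2 t" by (rule DERIV_imp_deriv)
    moreover have "deriv (deriv u) t + y t = 0" using ode t by blast
    ultimately show ?thesis by simp
  qed
  have neg: "\<forall>t\<in>{0..T}. u2 t \<le> 0"
  proof
    fix t assume t: "t \<in> {0..T}"
    show "u2 t \<le> 0"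
      by (rule continuous_le_on_closure[of "{0<..<T}"]) (use T t cu2 u2y assms(9) in auto)
  qed
  have conc: "(w - z) * u x + (z - x) * u w \<le> (w - x) * u z"
    if "0 \<le> x" "x \<le> z" "z \<le> w" "w \<le> T" for x z w
    using concave_ineq[OF d1 d2 neg that] .
  have cu: "continuous_on {0..T} u"
    by (rule has_derivative_continuous_on[where f'="\<lambda>t. (*) (u1 t)"])
       (use d1 in \<open>auto simp: has_field_derivative_def\<close>)
  define A where "A = u 0"
  define C where "C = u \<eta>"
  define B where "B = u T"
  have lin: "(\<lambda>s. A + (C - A) * s / \<eta>) s \<le> u s" if "s \<in> {0..\<eta>}" for s
  proof -
    have "(\<eta> - s) * u 0 + (s - 0) * u \<eta> \<le> (\<eta> - 0) * u s"
      using conc[of 0 s \<eta>] that e by auto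
    then show ?thesis using e unfolding A_def C_def by (simp add: field_simps)
  qed
  have intlin: "((\<lambda>s. A + (C - A) * s / \<eta>) has_integral \<eta> * (A + C) / 2) {0..\<eta>}"
  proof -
    have "((\<lambda>s. A + (C - A) * s / \<eta>) has_integral
        ((\<lambda>s. A * s + (C - A) * s^2 / (2*\<eta>)) \<eta> - (\<lambda>s. A * s + (C - A) * s^2 / (2*\<eta>)) 0)) {0..\<eta>}"
      apply (rule fundamental_theorem_of_calculus)
      using e apply simp
      apply (auto intro!: derivative_eq_intros simp: has_real_derivative_iff_has_vector_derivative[symmetric])
      using e by (simp add: field_simps power2_eq_square)
    moreover have "(\<lambda>s. A * s + (C - A) * s^2 / (2*\<eta>)) \<eta> - (\<lambda>s. A * s + (C - A) * s^2 / (2*\<eta>)) 0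
       = \<eta> * (A + C) / 2" using e by (simp add: field_simps power2_eq_square)
    ultimately show ?thesis by metis
  qed
  have intu: "u integrable_on {0..\<eta>}"
    by (rule integrable_continuous_real, rule continuous_on_subset[OF cu]) (use e in auto)
  have trap: "\<eta> * (A + C) / 2 \<le> integral {0..\<eta>} u"
    by (rule has_integral_le[OF intlin integrable_integral[OF intu]]) (use lin in auto)
  have Bge: "B \<ge> \<alpha> * (\<beta> + 1) * \<eta> * C / 2"
  proof -
    have "B \<ge> \<alpha> * (\<eta> * (A + C) / 2)" unfolding B_def bcT
      using trap a by (intro mult_left_mono) auto
    then show ?thesis using bc0 unfolding A_def C_def by (simp add: algebra_simps)
  qed
  have Dn: "\<alpha> * \<eta>^2 - 2 * \<eta> + 2 * T > 0"
  proof -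
    have "\<alpha> * \<eta>^2 > 0" using a e by simp
    then show ?thesis using e by linarith
  qed
  have K: "(2 * T - \<alpha> * \<eta>^2) - \<beta> * (\<alpha> * \<eta>^2 - 2 * \<eta> + 2 * T) > 0"
    using b(2) Dn by (simp add: pos_less_divide_eq algebra_simps)
  have B2: "2 * B \<ge> \<alpha> * (\<beta> + 1) * \<eta> * C" using Bge by linarith
  have concCT: "T * C \<ge> (T - \<eta>) * A + \<eta> * B"
    using conc[of 0 \<eta> T] e unfolding A_def B_def C_def by auto
  have Cnn: "C \<ge> 0"
  proof (rule ccontr)
    assume "\<not> C \<ge> 0"
    then have Cn: "C < 0" by simp
    have "2 * T * C \<ge> 2 * (T - \<eta>) * \<beta> * C + 2 * \<eta> * B"
      using concCT bc0 unfolding A_def C_def by (simp add: algebra_simps)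
    moreover have "2 * \<eta> * B \<ge> \<alpha> * (\<beta> + 1) * \<eta>^2 * C"
    proof -
      have "\<eta> * (\<alpha> * (\<beta> + 1) * \<eta> * C) \<le> \<eta> * (2 * B)"
        using B2 e by (intro mult_left_mono) auto
      then show ?thesis by (simp add: power2_eq_square algebra_simps)
    qed
    ultimately have "C * ((2 * T - \<alpha> * \<eta>^2) - \<beta> * (\<alpha> * \<eta>^2 - 2 * \<eta> + 2 * T)) \<ge> 0"
      by (simp add: algebra_simps power2_eq_square)
    then show False using K Cn by (simp add: mult_less_0_iff zero_le_mult_iff)
  qed
  have Ann: "A \<ge> 0" using bc0 Cnn b unfolding A_def C_def by simp
  have Bnn: "B \<ge> 0"
  proof -
    have "\<alpha> * (\<beta> + 1) * \<eta> * C \<ge> 0" using Cnn a b e by simp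
    then show ?thesis using B2 by linarith
  qed
  have unn: "u t \<ge> 0" if "t \<in> {0..T}" for t
  proof -
    have "(T - t) * A + t * B \<le> T * u t"
      using conc[of 0 t T] that unfolding A_def B_def by auto
    moreover have "(T - t) * A + t * B \<ge> 0" using that Ann Bnn by auto
    ultimately have "T * u t \<ge> 0" by linarith
    then show ?thesis using T by (simp add: zero_le_mult_iff)
  qed
  obtain \<tau> where tau: "\<tau> \<in> {0..T}" and tmax: "\<forall>t\<in>{0..T}. u t \<le> u \<tau>"
    using continuous_attains_sup[OF compact_Icc _ cu] T by auto
  define M where "M = u \<tau>"
  have Mnn: "M \<ge> 0" using unn tau M_def by auto
  have sn: "sup_norm T u = M"
    unfolding sup_norm_def M_def
    by (rule cSup_eq_maximum) (use tau tmax unn in \<open>auto\<close>)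
  define g1 where "g1 = \<eta> / T"
  define g2 where "g2 = \<alpha> * (\<beta> + 1) * \<eta>^2 / (2 * T)"
  define g3 where "g3 = \<alpha> * (\<beta> + 1) * \<eta> * (T - \<eta>) / (2 * T - \<alpha> * (\<beta> + 1) * \<eta>^2)"
  have gdef: "gamma_const T \<eta> \<alpha> \<beta> = min g1 (min g2 g3)"
    unfolding gamma_const_def g1_def g2_def g3_def by simp
  have D: "2 * T - \<alpha> * (\<beta> + 1) * \<eta>^2 > 0"
  proof -
    have "\<beta> * (2 * T - 2 * \<eta>) \<ge> 0" using b e by simp
    then show ?thesis using K by (simp add: algebra_simps)
  qed
  have g1p: "0 < g1" "g1 < 1" unfolding g1_def using e T by auto
  have g2p: "0 < g2" unfolding g2_def using a b e T by (simp add: zero_less_mult_iff add_nonneg_pos)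
  have g3p: "0 < g3" unfolding g3_def using a b e T D
    by (intro divide_pos_pos mult_pos_pos) auto
  define \<gamma> where "\<gamma> = gamma_const T \<eta> \<alpha> \<beta>"
  have gle: "\<gamma> \<le> g1" "\<gamma> \<le> g2" "\<gamma> \<le> g3" unfolding \<gamma>_def gdef by auto
  have gp: "0 < \<gamma>" "\<gamma> < 1" unfolding \<gamma>_def gdef using g1p g2p g3p by auto
  have key: "C \<ge> \<gamma> * M \<and> B \<ge> \<gamma> * M"
  proof (cases "\<eta> \<le> \<tau>")
    case True
    have "(\<tau> - \<eta>) * A + \<eta> * M \<le> \<tau> * C"
      using conc[of 0 \<eta> \<tau>] True e tau unfolding A_def C_def M_def by auto
    moreover have "(\<tau> - \<eta>) * A \<ge> 0" using True Ann by simp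
    ultimately have "\<eta> * M \<le> \<tau> * C" by linarith
    also have "\<dots> \<le> T * C" using tau Cnn by (intro mult_right_mono) auto
    finally have c1: "C \<ge> g1 * M" unfolding g1_def using T by (simp add: field_simps)
    have "g1 * M \<ge> \<gamma> * M" using gle Mnn by (intro mult_right_mono) auto
    with c1 have cC: "C \<ge> \<gamma> * M" by simp
    have "B \<ge> \<alpha> * (\<beta> + 1) * \<eta> * C / 2" by (rule Bge)
    moreover have "\<alpha> * (\<beta> + 1) * \<eta> * C / 2 \<ge> \<alpha> * (\<beta> + 1) * \<eta> * (g1 * M) / 2"
      using c1 a b e by (intro divide_right_mono mult_left_mono) auto
    moreover have "\<alpha> * (\<beta> + 1) * \<eta> * (g1 * M) / 2 = g2 * M"
      unfolding g1_def g2_def using T by (simp add: field_simps power2_eq_square)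
    moreover have "g2 * M \<ge> \<gamma> * M" using gle Mnn by (intro mult_right_mono) auto
    ultimately show ?thesis using cC by linarith
  next
    case False
    have "(T - \<eta>) * M + (\<eta> - \<tau>) * B \<le> (T - \<tau>) * C"
      using conc[of \<tau> \<eta> T] False e tau unfolding B_def C_def M_def by auto
    moreover have "B \<le> M" using tmax T unfolding B_def M_def by auto
    moreover have "(T - \<eta>) * B \<le> (T - \<eta>) * M" using calculation(2) e by (intro mult_left_mono) auto
    moreover have "(T - \<tau>) * B = (T - \<eta>) * B + (\<eta> - \<tau>) * B" by (simp add: algebra_simps)
    ultimately have h: "(T - \<tau>) * B \<le> (T - \<tau>) * C" by linarith
    have CB: "B \<le> C" using h False e by (simp add: mult_le_cancel_left) 
    have TC: "T * C \<ge> (T - \<eta>) * M + \<eta> * B"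
    proof -
      have "\<tau> * B \<le> \<tau> * C" using CB tau by (intro mult_left_mono) auto
      then show ?thesis
        using \<open>(T - \<eta>) * M + (\<eta> - \<tau>) * B \<le> (T - \<tau>) * C\<close> by (simp add: algebra_simps)
    qed
    have "2 * T * B \<ge> \<alpha> * (\<beta> + 1) * \<eta> * (T * C)"
    proof -
      have "T * (\<alpha> * (\<beta> + 1) * \<eta> * C) \<le> T * (2 * B)"
        using B2 T by (intro mult_left_mono) auto
      then show ?thesis by (simp add: algebra_simps)
    qed
    moreover have "\<alpha> * (\<beta> + 1) * \<eta> * (T * C) \<ge> \<alpha> * (\<beta> + 1) * \<eta> * ((T - \<eta>) * M + \<eta> * B)"
      using TC a b e by (intro mult_left_mono) auto
    ultimately have "B * (2 * T - \<alpha> * (\<beta> + 1) * \<eta>^2) \<ge> \<alpha> * (\<beta> + 1) * \<eta> * (T - \<eta>) * M"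
      by (simp add: algebra_simps power2_eq_square)
    then have "B \<ge> g3 * M" unfolding g3_def using D by (simp add: field_simps)
    moreover have "g3 * M \<ge> \<gamma> * M" using gle Mnn by (intro mult_right_mono) auto
    ultimately show ?thesis using CB by linarith
  qed
  have pt: "\<gamma> * M \<le> u x" if "x \<in> {\<eta>..T}" for x
  proof -
    have "(T - x) * C + (x - \<eta>) * B \<le> (T - \<eta>) * u x"
      using conc[of \<eta> x T] that e unfolding B_def C_def by auto
    moreover have "(T - x) * (\<gamma> * M) + (x - \<eta>) * (\<gamma> * M) \<le> (T - x) * C + (x - \<eta>) * B"
      using key that by (intro add_mono mult_left_mono) auto
    ultimately have "(T - \<eta>) * (\<gamma> * M) \<le> (T - \<eta>) * u x" by (simp add: algebra_simps)
    then show ?thesis using e by simp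
  qed
  have "\<gamma> * M \<le> Inf (u ` {\<eta>..T})"
    by (rule cInf_greatest) (use e pt in auto)
  then show ?thesis using gp sn unfolding \<gamma>_def by simp
qed

end
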